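(* The image of the cone $C$ under the linear map $\psi^*\otimes\mathbb{R}:\mathbb{Z}(Q)^\vee\otimes\mathbb{R}\to N\otimes\mathbb{R}$ is the cone $\sigma$.
   Context: Let $\mathbb{k}$ be an algebraically closed field and $X=\operatorname{Spec}R$ a normal affine toric variety of dimension $n$ with a torus-fixed point, $R=\mathbb{k}[\sigma^\vee\cap M]$, $\sigma\subset N\otimes\mathbb{R}$ strongly convex rational polyhedral, $N=M^\vee$. Let $\sigma(1)$ be the rays, $d=|\sigma(1)|$, $v_\rho$ primitive generators, $D_\rho$ toric prime divisors, torus-invariant divisors identified with $\mathbb{Z}^d$; exact sequence $0\to M\to\mathbb{Z}^d\xrightarrow{\deg}\operatorname{Cl}(X)\to0$, $u\mapsto\sum_\rho\langle u,v_\rho\rangle D_\rho$. Let $\mathscr{E}=(E_0=\mathcal{O}_X,E_1,\dots,E_r)$ be pairwise distinct rank one reflexive sheaves, $E_i=\mathcal{O}_X(D_i')$, and $Q$ its quiver of sections: vertices $0,\dots,r$; an arrow $a:i\to j$ with label $\operatorname{div}(a)\in\mathbb{N}^d$ for each irreducible $T_M$-invariant section $x^{\operatorname{div}(a)}$ of $\operatorname{Hom}(E_i,E_j)\cong H^0(\mathcal{O}_X(D_j'-D_i'))$ (irreducible: not in the image of multiplication through any $E_k$, $k\neq i,j$). $\operatorname{Wt}(Q)=\{\theta\in\mathbb{Z}^{Q_0}:\sum\theta_i=0\}$; $\pi:\mathbb{Z}^{Q_1}\to\operatorname{Wt}(Q)\oplus\mathbb{Z}^d$, $\chi_a\mapsto(\chi_{\mathsf{h}(a)}-\chi_{\mathsf{t}(a)},\operatorname{div}(a))$;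 $\mathbb{Z}(Q)=\pi(\mathbb{Z}^{Q_1})$, $\mathbb{N}(Q)=\pi(\mathbb{N}^{Q_1})$; $\pi_1,\pi_2$ the projections to $\operatorname{Wt}(Q)$ and $\mathbb{Z}^d$. The restriction of $\pi_2$ to $\ker\pi_1$ is an isomorphism onto the image of $M$ in $\mathbb{Z}^d$; let $\psi:M\to\mathbb{Z}(Q)$ be the resulting injection (so $\pi_2\circ\psi$ is the inclusion $M\hookrightarrow\mathbb{Z}^d$), with dual $\psi^*:\mathbb{Z}(Q)^\vee\to N$. Let $C=\{v\in\mathbb{Z}(Q)^\vee\otimes\mathbb{R}:\langle v,u\rangle\ge0\ \forall u\in\mathbb{N}(Q)\}$. *)

theory Defs
  imports Complex_Main
begin

text \<open>M = N = Z^n with coordinates indexed by a finite type 'n; the pairing is the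
standard dot product. The rays of sigma are indexed by a finite type 'r (so d = CARD('r)),
with primitive generators v :: 'r => N. Torus-invariant divisors are 'r => int (= Z^d).\<close>

definition pair :: "('n::finite \<Rightarrow> int) \<Rightarrow> ('n \<Rightarrow> int) \<Rightarrow> int" where
  "pair u w = (\<Sum>k\<in>UNIV. u k * w k)"

definition rpair :: "('n::finite \<Rightarrow> real) \<Rightarrow> ('n \<Rightarrow> real) \<Rightarrow> real" where
  "rpair u w = (\<Sum>k\<in>UNIV. u k * w k)"

definition cone_sigma :: "('r::finite \<Rightarrow> 'n::finite \<Rightarrow> int) \<Rightarrow> ('n \<Rightarrow> real) set" where
  "cone_sigma v = {x. \<exists>c::'r \<Rightarrow> real. (\<forall>\<rho>. c \<rho> \<ge> 0) \<and>
                         x = (\<lambda>k. \<Sum>\<rho>\<in>UNIV. c \<rho> * real_of_int (v \<rho> k))}"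

definition primitive :: "('n::finite \<Rightarrow> int) \<Rightarrow> bool" where
  "primitive w \<longleftrightarrow> (\<exists>k. w k \<noteq> 0) \<and> (\<forall>m::int. m > 0 \<longrightarrow> (\<forall>k. m dvd w k) \<longrightarrow> m = 1)"

text \<open>Standing assumptions on the ray data: primitive generators, each generating an extremal
ray of sigma (v rho not in the cone spanned by the others; this also makes rho -> v rho
injective), sigma strongly convex, and sigma full-dimensional (torus-fixed point).\<close>
definition toric_cone_data :: "('r::finite \<Rightarrow> 'n::finite \<Rightarrow> int) \<Rightarrow> bool" where
  "toric_cone_data v \<longleftrightarrow>
     (\<forall>\<rho>. primitive (v \<rho>)) \<and>
     (\<forall>\<rho>. \<not> (\<exists>c::'r \<Rightarrow> real. (\<forall>\<tau>. c \<tau> \<ge> 0) \<and> c \<rho> = 0 \<and>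
              (\<lambda>k. real_of_int (v \<rho> k)) = (\<lambda>k. \<Sum>\<tau>\<in>UNIV. c \<tau> * real_of_int (v \<tau> k)))) \<and>
     (\<forall>x. x \<in> cone_sigma v \<and> (\<lambda>k. - x k) \<in> cone_sigma v \<longrightarrow> x = (\<lambda>k. 0)) \<and>
     (\<forall>u::'n \<Rightarrow> real. (\<forall>\<rho>. rpair u (\<lambda>k. real_of_int (v \<rho> k)) = 0) \<longrightarrow> u = (\<lambda>k. 0))"

text \<open>Image of u in M in Z^d: the principal divisor sum_rho <u,v_rho> D_rho.\<close>
definition div_of :: "('r::finite \<Rightarrow> 'n::finite \<Rightarrow> int) \<Rightarrow> ('n \<Rightarrow> int) \<Rightarrow> ('r \<Rightarrow> int)" where
  "div_of v u = (\<lambda>\<rho>. pair u (v \<rho>))"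

text \<open>deg D = deg E in Cl(X), i.e. D - E lies in the image of M.\<close>
definition lin_equiv :: "('r::finite \<Rightarrow> 'n::finite \<Rightarrow> int) \<Rightarrow> ('r \<Rightarrow> int) \<Rightarrow> ('r \<Rightarrow> int) \<Rightarrow> bool" where
  "lin_equiv v D E \<longleftrightarrow> (\<exists>u. (\<lambda>\<rho>. D \<rho> - E \<rho>) = div_of v u)"

text \<open>Labels of torus-invariant sections of Hom(E_i,E_j) = H^0(O_X(D'_j - D'_i)):
the section chi^u (with <u,v_rho> + (D'_j - D'_i)_rho >= 0) has label
div = D'_j - D'_i + div(chi^u) in N^d; equivalently, effective divisors of degree
deg D'_j - deg D'_i.\<close>
definition sections :: "('r::finite \<Rightarrow> 'n::finite \<Rightarrow> int) \<Rightarrow> (nat \<Rightarrow> 'r \<Rightarrow> int) \<Rightarrow> nat \<Rightarrow> nat \<Rightarrow> ('r \<Rightarrow> int) set" where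
  "sections v D' i j = {E. (\<forall>\<rho>. E \<rho> \<ge> 0) \<and> lin_equiv v E (\<lambda>\<rho>. D' j \<rho> - D' i \<rho>)}"

text \<open>Irreducible: x^E is not in the image of Hom(E_i,E_k) (x) Hom(E_k,E_j) -> Hom(E_i,E_j)
for any k (in 0..r) different from i and j.\<close>
definition irreducible_section :: "('r::finite \<Rightarrow> 'n::finite \<Rightarrow> int) \<Rightarrow> (nat \<Rightarrow> 'r \<Rightarrow> int) \<Rightarrow> nat \<Rightarrow> nat \<Rightarrow> nat \<Rightarrow> ('r \<Rightarrow> int) \<Rightarrow> bool" where
  "irreducible_section v D' r i j E \<longleftrightarrow> E \<in> sections v D' i j \<and>
     \<not> (\<exists>k\<le>r. k \<noteq> i \<and> k \<noteq> j \<and> (\<exists>E1 E2. E1 \<in> sections v D' i k \<and> E2 \<in> sections v D' k j \<and>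
              E = (\<lambda>\<rho>. E1 \<rho> + E2 \<rho>)))"

text \<open>An arrow a : i -> j with label div(a) = E is the triple (i, j, E) (tail, head, label).\<close>
type_synonym 'r arrow = "nat \<times> nat \<times> ('r \<Rightarrow> int)"

definition arrows :: "('r::finite \<Rightarrow> 'n::finite \<Rightarrow> int) \<Rightarrow> (nat \<Rightarrow> 'r \<Rightarrow> int) \<Rightarrow> nat \<Rightarrow> 'r arrow set" where
  "arrows v D' r = {(i, j, E). i \<le> r \<and> j \<le> r \<and> irreducible_section v D' r i j E}"

text \<open>Elements of Wt(Q) (+) Z^d, with Z^{Q_0} realised as nat => int (supported on 0..r).\<close>
type_synonym 'r wtdiv = "(nat \<Rightarrow> int) \<times> ('r \<Rightarrow> int)"

definition piQ :: "'r arrow \<Rightarrow> 'r wtdiv" where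
  "piQ a = (case a of (i, j, E) \<Rightarrow>
     ((\<lambda>l. (if l = j then 1 else 0) - (if l = i then 1 else 0)), E))"

definition wadd :: "'r wtdiv \<Rightarrow> 'r wtdiv \<Rightarrow> 'r wtdiv" where
  "wadd x y = ((\<lambda>l. fst x l + fst y l), (\<lambda>\<rho>. snd x \<rho> + snd y \<rho>))"

definition lincomb :: "'r arrow set \<Rightarrow> ('r arrow \<Rightarrow> int) \<Rightarrow> 'r wtdiv" where
  "lincomb S c = ((\<lambda>l. \<Sum>a\<in>S. c a * fst (piQ a) l), (\<lambda>\<rho>. \<Sum>a\<in>S. c a * snd (piQ a) \<rho>))"

text \<open>Z(Q) = pi(Z^{Q_1}) and N(Q) = pi(N^{Q_1}) (finitely supported coefficient vectors).\<close>
definition ZQ :: "('r::finite \<Rightarrow> 'n::finite \<Rightarrow> int) \<Rightarrow> (nat \<Rightarrow> 'r \<Rightarrow> int) \<Rightarrow> nat \<Rightarrow> 'r wtdiv set" where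
  "ZQ v D' r = {lincomb S c | S c. finite S \<and> S \<subseteq> arrows v D' r}"

definition NQ :: "('r::finite \<Rightarrow> 'n::finite \<Rightarrow> int) \<Rightarrow> (nat \<Rightarrow> 'r \<Rightarrow> int) \<Rightarrow> nat \<Rightarrow> 'r wtdiv set" where
  "NQ v D' r = {lincomb S c | S c. finite S \<and> S \<subseteq> arrows v D' r \<and> (\<forall>a. c a \<ge> 0)}"

text \<open>Z(Q)^vee (x) R is realised as Hom_Z(Z(Q), R): maps on the ambient group that are
additive on Z(Q) (their values off Z(Q) are irrelevant).\<close>
definition ZQ_dual_R :: "('r::finite \<Rightarrow> 'n::finite \<Rightarrow> int) \<Rightarrow> (nat \<Rightarrow> 'r \<Rightarrow> int) \<Rightarrow> nat \<Rightarrow> ('r wtdiv \<Rightarrow> real) set" where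
  "ZQ_dual_R v D' r = {f. \<forall>x\<in>ZQ v D' r. \<forall>y\<in>ZQ v D' r. f (wadd x y) = f x + f y}"

definition coneC :: "('r::finite \<Rightarrow> 'n::finite \<Rightarrow> int) \<Rightarrow> (nat \<Rightarrow> 'r \<Rightarrow> int) \<Rightarrow> nat \<Rightarrow> ('r wtdiv \<Rightarrow> real) set" where
  "coneC v D' r = {f \<in> ZQ_dual_R v D' r. \<forall>u\<in>NQ v D' r. f u \<ge> 0}"

text \<open>psi : M -> Z(Q): the unique element of ker pi_1 whose pi_2-image is the image of u in Z^d.\<close>
definition psi :: "('r::finite \<Rightarrow> 'n::finite \<Rightarrow> int) \<Rightarrow> ('n \<Rightarrow> int) \<Rightarrow> 'r wtdiv" where
  "psi v u = ((\<lambda>l. 0), div_of v u)"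

text \<open>psi^* (x) R : Z(Q)^vee (x) R -> N (x) R = R^n, f |-> f o psi, written in the dual
basis coordinates of N (x) R (k-th coordinate = value on the k-th basis vector of M).\<close>
definition psi_star_R :: "('r::finite \<Rightarrow> 'n::finite \<Rightarrow> int) \<Rightarrow> ('r wtdiv \<Rightarrow> real) \<Rightarrow> ('n \<Rightarrow> real)" where
  "psi_star_R v f = (\<lambda>k. f (psi v (\<lambda>k'. if k' = k then 1 else 0)))"

end

theory Submission imports Defs "HOL-Analysis.Analysis" begin


definition Vr :: "('r::finite \<Rightarrow> 'n::finite \<Rightarrow> int) \<Rightarrow> 'r \<Rightarrow> real^'n" where
 "Vr v \<rho> = (\<chi> k. real_of_int (v \<rho> k))"

definition Kc :: "('r::finite \<Rightarrow> 'n::finite \<Rightarrow> int) \<Rightarrow> (real^'n) set" where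
 "Kc v = {(\<Sum>\<rho>\<in>UNIV. c \<rho> *\<^sub>R Vr v \<rho>) | c. \<forall>\<rho>. c \<rho> \<ge> 0}"

definition Pc :: "('r::finite \<Rightarrow> 'n::finite \<Rightarrow> int) \<Rightarrow> (real^'n) set" where
 "Pc v = {(\<Sum>\<rho>\<in>UNIV. c \<rho> *\<^sub>R Vr v \<rho>) | c. (\<forall>\<rho>. c \<rho> \<ge> 0) \<and> sum c UNIV = 1}"

lemma cone_sigma_Kc: "x \<in> cone_sigma v \<longleftrightarrow> (\<chi> k. x k) \<in> Kc v"
  unfolding cone_sigma_def Kc_def
  by (auto simp: vec_eq_iff fun_eq_iff sum_component Vr_def)

lemma Kc_add: fixes v :: "'r::finite \<Rightarrow> 'n::finite \<Rightarrow> int"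
  shows "x \<in> Kc v \<Longrightarrow> y \<in> Kc v \<Longrightarrow> x + y \<in> Kc v"
  unfolding Kc_def
proof clarify
  fix c d :: "'r \<Rightarrow> real" assume "\<forall>\<rho>. 0 \<le> c \<rho>" "\<forall>\<rho>. 0 \<le> d \<rho>"
  then show "\<exists>e. (\<Sum>\<rho>\<in>UNIV. c \<rho> *\<^sub>R Vr v \<rho>) + (\<Sum>\<rho>\<in>UNIV. d \<rho> *\<^sub>R Vr v \<rho>) = (\<Sum>\<rho>\<in>UNIV. e \<rho> *\<^sub>R Vr v \<rho>) \<and> (\<forall>\<rho>. 0 \<le> e \<rho>)"
    by (intro exI[of _ "\<lambda>\<rho>. c \<rho> + d \<rho>"]) (auto simp: sum.distrib scaleR_add_left)
qed

lemma Kc_scale: fixes v :: "'r::finite \<Rightarrow> 'n::finite \<Rightarrow> int"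
  shows "x \<in> Kc v \<Longrightarrow> t \<ge> 0 \<Longrightarrow> t *\<^sub>R x \<in> Kc v"
  unfolding Kc_def
proof clarify
  fix c :: "'r \<Rightarrow> real" assume "\<forall>\<rho>. 0 \<le> c \<rho>" "t \<ge> 0"
  then show "\<exists>e. t *\<^sub>R (\<Sum>\<rho>\<in>UNIV. c \<rho> *\<^sub>R Vr v \<rho>) = (\<Sum>\<rho>\<in>UNIV. e \<rho> *\<^sub>R Vr v \<rho>) \<and> (\<forall>\<rho>. 0 \<le> e \<rho>)"
    by (intro exI[of _ "\<lambda>\<rho>. t * c \<rho>"]) (auto simp: scaleR_sum_right)
qed

lemma delta_sum: fixes f :: "'a::finite \<Rightarrow> 'b::real_vector"
  shows "(\<Sum>\<tau>\<in>UNIV. (if \<tau> = \<rho> then a else 0) *\<^sub>R f \<tau>) = a *\<^sub>R f \<rho>"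
  by (simp add: if_distrib[of "\<lambda>c. c *\<^sub>R _"] cong: if_cong)

lemma Vr_Pc: "Vr v \<rho> \<in> Pc v"
  unfolding Pc_def
  by (rule CollectI, rule exI[of _ "\<lambda>\<tau>. if \<tau> = \<rho> then 1 else 0"]) (simp add: delta_sum)

lemma Pc_Kc: "Pc v \<subseteq> Kc v"
  unfolding Pc_def Kc_def by blast

lemma convex_Pc: "convex (Pc v)"
  unfolding convex_def
proof (intro ballI allI impI)
  fix x y u w assume x: "x \<in> Pc v" and y: "y \<in> Pc v" and u: "0 \<le> (u::real)" and w: "0 \<le> w" and uw: "u + w = 1"
  from x obtain c where c: "x = (\<Sum>\<rho>\<in>UNIV. c \<rho> *\<^sub>R Vr v \<rho>)" "\<forall>\<rho>. c \<rho> \<ge> 0" "sum c UNIV = 1"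
    unfolding Pc_def by blast
  from y obtain d where d: "y = (\<Sum>\<rho>\<in>UNIV. d \<rho> *\<^sub>R Vr v \<rho>)" "\<forall>\<rho>. d \<rho> \<ge> 0" "sum d UNIV = 1"
    unfolding Pc_def by blast
  have "u *\<^sub>R x + w *\<^sub>R y = (\<Sum>\<rho>\<in>UNIV. (u * c \<rho> + w * d \<rho>) *\<^sub>R Vr v \<rho>)"
    by (simp add: c d scaleR_sum_right scaleR_add_left sum.distrib)
  moreover have "sum (\<lambda>\<rho>. u * c \<rho> + w * d \<rho>) UNIV = 1"
    by (simp add: sum.distrib sum_distrib_left[symmetric] c d uw)
  moreover have "\<forall>\<rho>. u * c \<rho> + w * d \<rho> \<ge> 0" using c d u w by simp
  ultimately show "u *\<^sub>R x + w *\<^sub>R y \<in> Pc v" unfolding Pc_def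
    by (intro CollectI exI[of _ "\<lambda>\<rho>. u * c \<rho> + w * d \<rho>"]) simp
qed

lemma Kc_pointed:
  assumes "toric_cone_data v" "z \<in> Kc v" "- z \<in> Kc v" shows "z = 0"
proof -
  have "(\<lambda>k. z $ k) \<in> cone_sigma v" using assms(2) by (simp add: cone_sigma_Kc)
  moreover have "(\<lambda>k. - (\<lambda>k. z $ k) k) \<in> cone_sigma v" using assms(3)
    by (simp add: cone_sigma_Kc) (metis (no_types) vec_eq_iff vec_lambda_beta uminus_vec_def)
  ultimately have "(\<lambda>k. z $ k) = (\<lambda>k. 0)" using assms(1) unfolding toric_cone_data_def by blast
  then show ?thesis by (simp add: vec_eq_iff fun_eq_iff)
qed

lemma Vr_nonzero: "toric_cone_data v \<Longrightarrow> Vr v \<rho> \<noteq> 0"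
  unfolding toric_cone_data_def primitive_def Vr_def by (auto simp: vec_eq_iff)

lemma zero_notin_Pc:
  assumes "toric_cone_data v" shows "0 \<notin> Pc v"
proof
  assume "0 \<in> Pc v"
  then obtain c where c: "0 = (\<Sum>\<rho>\<in>UNIV. c \<rho> *\<^sub>R Vr v \<rho>)" "\<forall>\<rho>. c \<rho> \<ge> 0" "sum c UNIV = 1"
    unfolding Pc_def by blast
  have "\<exists>\<rho>0. c \<rho>0 > 0"
  proof (rule ccontr)
    assume "\<not> (\<exists>\<rho>0. c \<rho>0 > 0)"
    then have "\<forall>\<rho>. c \<rho> = 0" using c(2) by (meson antisym not_less)
    then have "sum c UNIV = 0" by simp
    then show False using c(3) by simp
  qed
  then obtain \<rho>0 where p0: "c \<rho>0 > 0" by blast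
  define z where "z = c \<rho>0 *\<^sub>R Vr v \<rho>0"
  have zK: "z \<in> Kc v" unfolding z_def
    by (rule Kc_scale[OF subsetD[OF Pc_Kc Vr_Pc]]) (use p0 in simp)
  define d where "d = (\<lambda>\<tau>. if \<tau> = \<rho>0 then 0 else c \<tau>)"
  have "(\<Sum>\<rho>\<in>UNIV. c \<rho> *\<^sub>R Vr v \<rho>) = (\<Sum>\<rho>\<in>UNIV. (if \<rho> = \<rho>0 then c \<rho>0 else 0) *\<^sub>R Vr v \<rho> + d \<rho> *\<^sub>R Vr v \<rho>)"
    by (rule sum.cong) (auto simp: d_def)
  also have "\<dots> = z + (\<Sum>\<rho>\<in>UNIV. d \<rho> *\<^sub>R Vr v \<rho>)"
    by (simp add: sum.distrib delta_sum z_def)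
  finally have "z + (\<Sum>\<rho>\<in>UNIV. d \<rho> *\<^sub>R Vr v \<rho>) = 0" using c(1) by simp
  then have "- z = (\<Sum>\<rho>\<in>UNIV. d \<rho> *\<^sub>R Vr v \<rho>)" by (metis add_eq_0_iff)
  moreover have "\<forall>\<rho>. d \<rho> \<ge> 0" using c(2) by (simp add: d_def)
  ultimately have "- z \<in> Kc v" unfolding Kc_def by blast
  then have "z = 0" using Kc_pointed[OF assms zK] by simp
  then show False using p0 Vr_nonzero[OF assms] unfolding z_def by simp
qed

lemma hull_Pc: "convex hull (range (Vr v)) \<subseteq> Pc v"
  by (rule hull_minimal) (auto simp: Vr_Pc convex_Pc)

lemma gordan_real:
  assumes "toric_cone_data v" shows "\<exists>a. \<forall>\<rho>. inner a (Vr v \<rho>) > 0"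
proof -
  have "0 \<notin> convex hull (range (Vr v))" using hull_Pc zero_notin_Pc[OF assms] by blast
  moreover have "closed (convex hull (range (Vr v)))"
    by (intro compact_imp_closed finite_imp_compact_convex_hull) simp
  ultimately obtain a b where "0 < b" "\<forall>x\<in>convex hull (range (Vr v)). inner a x > b"
    using separating_hyperplane_closed_0[OF convex_convex_hull] by blast
  then show ?thesis by (meson hull_inc rangeI less_trans)
qed

lemma sep_real:
  assumes "toric_cone_data v" "y \<notin> Kc v"
  shows "\<exists>a. (\<forall>\<rho>. inner a (Vr v \<rho>) \<ge> 0) \<and> inner a y < 0"
proof -
  define S where "S = conic hull (convex hull (range (Vr v)))"
  have h0: "0 \<notin> convex hull (range (Vr v))" using hull_Pc zero_notin_Pc[OF assms(1)] by blast
  have "closed S" unfolding S_def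
    by (rule closed_conic_hull) (simp add: h0 finite_imp_compact_convex_hull)
  moreover have "convex S" unfolding S_def by (simp add: convex_conic_hull)
  moreover have SK: "S \<subseteq> Kc v"
  proof
    fix x assume "x \<in> S"
    then obtain t z where "x = t *\<^sub>R z" "t \<ge> 0" "z \<in> convex hull (range (Vr v))"
      unfolding S_def conic_hull_explicit by blast
    then show "x \<in> Kc v" using Kc_scale[OF subsetD[OF Pc_Kc subsetD[OF hull_Pc]]] by simp
  qed
  ultimately obtain a b where ab: "inner a y < b" "\<forall>x\<in>S. inner a x > b"
    using separating_hyperplane_closed_point assms(2) by blast
  have conS: "t *\<^sub>R x \<in> S" if "x \<in> S" "t \<ge> 0" for x t
    using conic_conic_hull that unfolding S_def conic_def by blast
  have VS: "Vr v \<rho> \<in> S" for \<rho> unfolding S_def by (meson hull_inc rangeI)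
  have "0 \<in> S" using conS[OF VS, of 0] by simp
  then have b0: "b < 0" using ab(2) by force
  have "inner a x \<ge> 0" if "x \<in> S" for x
  proof (rule ccontr)
    assume "\<not> inner a x \<ge> 0"
    then have neg: "inner a x < 0" by simp
    have "b / inner a x \<ge> 0" using neg b0 by (simp add: divide_nonpos_neg)
    then have "(b / inner a x) *\<^sub>R x \<in> S" using conS that by blast
    then have "inner a ((b / inner a x) *\<^sub>R x) > b" using ab(2) by blast
    then show False using neg by simp
  qed
  then show ?thesis using VS ab(1) b0 by force
qed



lemma inner_chi: "inner (\<chi> k. a k) (\<chi> k. b k) = rpair a b"
  by (simp add: inner_vec_def rpair_def)

lemma eventually_mult_gt:
  assumes "(a::real) > 0" shows "eventually (\<lambda>N. real N * a > B) sequentially"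
proof -
  obtain n where "B < real n * a" using ex_less_of_nat_mult[OF assms] by blast
  then show ?thesis unfolding eventually_sequentially
    by (metis assms less_le_trans mult_right_mono of_nat_mono less_imp_le)
qed

lemma rounding:
  fixes w :: "'n::finite \<Rightarrow> real"
  assumes "finite X" "\<forall>x\<in>X. rpair w x > 0"
  shows "\<exists>u::'n \<Rightarrow> int. \<forall>x\<in>X. rpair (\<lambda>k. real_of_int (u k)) x > 0"
proof -
  have "\<forall>x\<in>X. eventually (\<lambda>N. real N * rpair w x > (\<Sum>k\<in>UNIV. \<bar>x k\<bar>)) sequentially"
  proof
    fix x assume "x \<in> X"
    then have "rpair w x > 0" using assms(2) by simp
    then show "eventually (\<lambda>N. real N * rpair w x > (\<Sum>k\<in>UNIV. \<bar>x k\<bar>)) sequentially"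
      by (rule eventually_mult_gt)
  qed
  then have "eventually (\<lambda>N. \<forall>x\<in>X. real N * rpair w x > (\<Sum>k\<in>UNIV. \<bar>x k\<bar>)) sequentially"
    by (rule eventually_ball_finite[OF assms(1)])
  then obtain N0 where N0: "\<forall>n\<ge>N0. \<forall>x\<in>X. real n * rpair w x > (\<Sum>k\<in>UNIV. \<bar>x k\<bar>)"
    unfolding eventually_sequentially by blast
  define N where "N = N0"
  have N: "\<forall>x\<in>X. real N * rpair w x > (\<Sum>k\<in>UNIV. \<bar>x k\<bar>)" using N0 unfolding N_def by simp
  define u where "u = (\<lambda>k. \<lfloor>real N * w k\<rfloor>)"
  have "rpair (\<lambda>k. real_of_int (u k)) x > 0" if "x \<in> X" for x
  proof -
    have "real N * rpair w x - rpair (\<lambda>k. real_of_int (u k)) x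
          = (\<Sum>k\<in>UNIV. (real N * w k - real_of_int (u k)) * x k)"
      by (simp add: rpair_def sum_distrib_left sum_subtractf algebra_simps)
    also have "\<dots> \<le> (\<Sum>k\<in>UNIV. \<bar>x k\<bar>)"
    proof (rule sum_mono)
      fix k
      have "0 \<le> real N * w k - real_of_int (u k)" "real N * w k - real_of_int (u k) \<le> 1"
        unfolding u_def by linarith+
      then have "\<bar>(real N * w k - real_of_int (u k)) * x k\<bar> \<le> \<bar>x k\<bar>"
        by (simp add: abs_mult mult_left_le_one_le)
      then show "(real N * w k - real_of_int (u k)) * x k \<le> \<bar>x k\<bar>" by linarith
    qed
    finally have le: "real N * rpair w x - rpair (\<lambda>k. real_of_int (u k)) x \<le> (\<Sum>k\<in>UNIV. \<bar>x k\<bar>)" .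
    have Nx: "real N * rpair w x > (\<Sum>k\<in>UNIV. \<bar>x k\<bar>)" using N that by blast
    show ?thesis using le Nx by linarith
  qed
  then show ?thesis by blast
qed

lemma pair_rpair: "real_of_int (pair u w) = rpair (\<lambda>k. real_of_int (u k)) (\<lambda>k. real_of_int (w k))"
  by (simp add: pair_def rpair_def)

lemma interior_int:
  assumes "toric_cone_data v"
  shows "\<exists>u. \<forall>\<rho>. pair u (v \<rho>) \<ge> 1"
proof -
  obtain a where a: "\<forall>\<rho>. inner a (Vr v \<rho>) > 0" using gordan_real[OF assms] by blast
  have "\<forall>x\<in>range (\<lambda>\<rho> k. real_of_int (v \<rho> k)). rpair (\<lambda>k. a $ k) x > 0"
    using a by (auto simp: Vr_def inner_chi[symmetric])
  moreover have "finite (range (\<lambda>\<rho> k. real_of_int (v \<rho> k)))" by simp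
  ultimately obtain u where "\<forall>x\<in>range (\<lambda>\<rho> k. real_of_int (v \<rho> k)). rpair (\<lambda>k. real_of_int (u k)) x > 0"
    using rounding by blast
  then have "\<forall>\<rho>. pair u (v \<rho>) > 0" by (auto simp: pair_rpair[symmetric])
  then show ?thesis by (intro exI[of _ u]) (simp add: int_one_le_iff_zero_less)
qed


lemma farkas_int:
  fixes v :: "'r::finite \<Rightarrow> 'n::finite \<Rightarrow> int"
  assumes "toric_cone_data v"
    and "\<forall>u::'n \<Rightarrow> int. (\<forall>\<rho>. pair u (v \<rho>) \<ge> 0) \<longrightarrow> (\<Sum>k\<in>UNIV. real_of_int (u k) * y k) \<ge> 0"
  shows "y \<in> cone_sigma v"
proof (rule ccontr)
  assume "y \<notin> cone_sigma v"
  then have "(\<chi> k. y k) \<notin> Kc v" by (simp add: cone_sigma_Kc)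
  then obtain a where a: "\<forall>\<rho>. inner a (Vr v \<rho>) \<ge> 0" "inner a (\<chi> k. y k) < 0"
    using sep_real[OF assms(1)] by blast
  obtain a0 where a0: "\<forall>\<rho>. inner a0 (Vr v \<rho>) > 0" using gordan_real[OF assms(1)] by blast
  define e where "e = - inner a (\<chi> k. y k) / (\<bar>inner a0 (\<chi> k. y k)\<bar> + 1)"
  have e0: "e > 0" unfolding e_def
    by (rule divide_pos_pos) (use a(2) in \<open>auto simp: add_nonneg_pos\<close>)
  define w where "w = a + e *\<^sub>R a0"
  have wV: "inner w (Vr v \<rho>) > 0" for \<rho>
    using a(1) a0 e0 by (simp add: w_def inner_add_left add_nonneg_pos)
  have "e * inner a0 (\<chi> k. y k) \<le> e * \<bar>inner a0 (\<chi> k. y k)\<bar>" using e0 by simp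
  also have "\<dots> < e * (\<bar>inner a0 (\<chi> k. y k)\<bar> + 1)" using e0 by simp
  also have "\<dots> = - inner a (\<chi> k. y k)" unfolding e_def by simp
  finally have wy: "inner w (\<chi> k. y k) < 0" by (simp add: w_def inner_add_left)
  let ?X = "range (\<lambda>\<rho> k. real_of_int (v \<rho> k)) \<union> {(\<lambda>k. - y k)}"
  have "\<forall>x\<in>?X. rpair (\<lambda>k. w $ k) x > 0"
  proof
    fix x assume "x \<in> ?X"
    then consider \<rho> where "x = (\<lambda>k. real_of_int (v \<rho> k))" | "x = (\<lambda>k. - y k)" by blast
    then show "rpair (\<lambda>k. w $ k) x > 0"
    proof cases
      case 1 then show ?thesis using wV[of \<rho>] by (simp add: Vr_def inner_chi[symmetric])
    next
      case 2
      have "rpair (\<lambda>k. w $ k) x = - inner w (\<chi> k. y k)"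
        by (simp add: 2 rpair_def inner_vec_def sum_negf)
      then show ?thesis using wy by simp
    qed
  qed
  moreover have "finite ?X" by simp
  ultimately obtain u where u: "\<forall>x\<in>?X. rpair (\<lambda>k. real_of_int (u k)) x > 0"
    using rounding by blast
  have "pair u (v \<rho>) \<ge> 0" for \<rho>
  proof -
    have "rpair (\<lambda>k. real_of_int (u k)) (\<lambda>k. real_of_int (v \<rho> k)) > 0" using u by blast
    then have "real_of_int (pair u (v \<rho>)) > 0" by (simp only: pair_rpair)
    then show ?thesis by simp
  qed
  then have "(\<Sum>k\<in>UNIV. real_of_int (u k) * y k) \<ge> 0" using assms(2) by simp
  moreover have "rpair (\<lambda>k. real_of_int (u k)) (\<lambda>k. - y k) > 0" using u by blast
  ultimately show False by (simp add: rpair_def sum_negf)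
qed



definition wneg :: "'r wtdiv \<Rightarrow> 'r wtdiv" where
  "wneg x = ((\<lambda>l. - fst x l), (\<lambda>\<rho>. - snd x \<rho>))"

lemma sum_if_restrict:
  fixes c g :: "'a \<Rightarrow> int"
  assumes "finite T" "S \<subseteq> T"
  shows "(\<Sum>a\<in>T. (if a \<in> S then c a else 0) * g a) = (\<Sum>a\<in>S. c a * g a)"
proof -
  have "(\<Sum>a\<in>T. (if a \<in> S then c a else 0) * g a) = (\<Sum>a\<in>T. if a \<in> S then c a * g a else 0)"
    by (rule sum.cong) auto
  also have "\<dots> = (\<Sum>a\<in>T \<inter> S. c a * g a)" using sum.inter_restrict[OF assms(1)] by metis
  also have "T \<inter> S = S" using assms(2) by blast
  finally show ?thesis .
qed

lemma lincomb_union: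
  assumes "finite S1" "finite S2"
  shows "wadd (lincomb S1 c1) (lincomb S2 c2) =
     lincomb (S1 \<union> S2) (\<lambda>a. (if a \<in> S1 then c1 a else 0) + (if a \<in> S2 then c2 a else 0))"
proof -
  have fin: "finite (S1 \<union> S2)" using assms by simp
  have *: "(\<Sum>a\<in>S1 \<union> S2. ((if a \<in> S1 then c1 a else 0) + (if a \<in> S2 then c2 a else 0)) * g a)
      = (\<Sum>a\<in>S1. c1 a * g a) + (\<Sum>a\<in>S2. c2 a * g a)" for g :: "_ \<Rightarrow> int"
    by (simp add: distrib_right sum.distrib sum_if_restrict[OF fin])
  show ?thesis unfolding wadd_def lincomb_def by (simp add: *)
qed

lemma NQ_wadd: "x \<in> NQ v D' r \<Longrightarrow> y \<in> NQ v D' r \<Longrightarrow> wadd x y \<in> NQ v D' r"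
proof -
  assume "x \<in> NQ v D' r" "y \<in> NQ v D' r"
  then obtain S1 c1 S2 c2 where h: "x = lincomb S1 c1" "finite S1" "S1 \<subseteq> arrows v D' r" "\<forall>a. c1 a \<ge> 0"
    "y = lincomb S2 c2" "finite S2" "S2 \<subseteq> arrows v D' r" "\<forall>a. c2 a \<ge> 0"
    unfolding NQ_def by blast
  show ?thesis unfolding NQ_def h(1,5) lincomb_union[OF h(2,6)]
    using h by (intro CollectI exI conjI[OF refl]) auto
qed

lemma ZQ_wadd: "x \<in> ZQ v D' r \<Longrightarrow> y \<in> ZQ v D' r \<Longrightarrow> wadd x y \<in> ZQ v D' r"
proof -
  assume "x \<in> ZQ v D' r" "y \<in> ZQ v D' r"
  then obtain S1 c1 S2 c2 where h: "x = lincomb S1 c1" "finite S1" "S1 \<subseteq> arrows v D' r"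
    "y = lincomb S2 c2" "finite S2" "S2 \<subseteq> arrows v D' r"
    unfolding ZQ_def by blast
  show ?thesis unfolding ZQ_def h(1,4) lincomb_union[OF h(2,5)]
    using h by (intro CollectI exI conjI[OF refl]) auto
qed

lemma ZQ_wneg: "x \<in> ZQ v D' r \<Longrightarrow> wneg x \<in> ZQ v D' r"
proof -
  assume "x \<in> ZQ v D' r"
  then obtain S c where h: "x = lincomb S c" "finite S" "S \<subseteq> arrows v D' r"
    unfolding ZQ_def by blast
  have "wneg x = lincomb S (\<lambda>a. - c a)"
    unfolding h wneg_def lincomb_def by (simp add: sum_negf)
  then show ?thesis unfolding ZQ_def using h by blast
qed

lemma NQ_ZQ: "NQ v D' r \<subseteq> ZQ v D' r"
  unfolding NQ_def ZQ_def by blast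

lemma zero_ZQ: "((\<lambda>l. 0), (\<lambda>\<rho>. 0)) \<in> ZQ v D' r"
proof -
  have "((\<lambda>l. 0), (\<lambda>\<rho>. 0)) = lincomb {} (\<lambda>_. 0)" by (simp add: lincomb_def)
  then show ?thesis unfolding ZQ_def by blast
qed

lemma pair_add: "pair (\<lambda>k. a k + b k) w = pair a w + pair b w"
  by (simp add: pair_def sum.distrib distrib_right)

lemma pair_smult: "pair (\<lambda>k. m * a k) w = m * pair a w"
  by (simp add: pair_def sum_distrib_left mult.assoc)

lemma psi_add: "psi v (\<lambda>k. a k + b k) = wadd (psi v a) (psi v b)"
  by (simp add: psi_def wadd_def div_of_def pair_add)

lemma sections_NQ:
  assumes hyp: "\<forall>i\<le>r. \<forall>j\<le>r. i \<noteq> j \<longrightarrow> \<not> lin_equiv v (D' i) (D' j)"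
  shows "i \<le> r \<Longrightarrow> j \<le> r \<Longrightarrow> E \<in> sections v D' i j \<Longrightarrow>
     ((\<lambda>l. (if l = j then 1 else 0) - (if l = i then 1 else 0)), E) \<in> NQ v D' r"
proof (induction "nat (sum E UNIV)" arbitrary: i j E rule: less_induct)
  case less
  show ?case
  proof (cases "irreducible_section v D' r i j E")
    case True
    then have A: "(i, j, E) \<in> arrows v D' r" using less.prems unfolding arrows_def by simp
    have "((\<lambda>l. (if l = j then 1 else 0) - (if l = i then 1 else 0)), E) = lincomb {(i, j, E)} (\<lambda>_. 1)"
      by (simp add: lincomb_def piQ_def)
    then show ?thesis unfolding NQ_def using A by (intro CollectI exI[of _ "{(i, j, E)}"] exI[of _ "\<lambda>_. 1::int"]) auto
  next
    case False
    then obtain k E1 E2 where k: "k \<le> r" "k \<noteq> i" "k \<noteq> j" and E1: "E1 \<in> sections v D' i k"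
      and E2: "E2 \<in> sections v D' k j" and E: "E = (\<lambda>\<rho>. E1 \<rho> + E2 \<rho>)"
      using less.prems unfolding irreducible_section_def by blast
    have E1nn: "\<forall>\<rho>. E1 \<rho> \<ge> 0" and E2nn: "\<forall>\<rho>. E2 \<rho> \<ge> 0" using E1 E2 unfolding sections_def by auto
    have ex1: "\<exists>\<rho>. E1 \<rho> \<noteq> 0"
    proof (rule ccontr)
      assume "\<not> (\<exists>\<rho>. E1 \<rho> \<noteq> 0)"
      then have z: "\<And>\<rho>. E1 \<rho> = 0" by simp
      obtain u where u: "(\<lambda>\<rho>. E1 \<rho> - (D' k \<rho> - D' i \<rho>)) = div_of v u"
        using E1 unfolding sections_def lin_equiv_def by auto
      have "lin_equiv v (D' i) (D' k)" unfolding lin_equiv_def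
        using u by (intro exI[of _ u]) (simp add: z)
      then show False using hyp less.prems k by blast
    qed
    have ex2: "\<exists>\<rho>. E2 \<rho> \<noteq> 0"
    proof (rule ccontr)
      assume "\<not> (\<exists>\<rho>. E2 \<rho> \<noteq> 0)"
      then have z: "\<And>\<rho>. E2 \<rho> = 0" by simp
      obtain u where u: "(\<lambda>\<rho>. E2 \<rho> - (D' j \<rho> - D' k \<rho>)) = div_of v u"
        using E2 unfolding sections_def lin_equiv_def by auto
      have "lin_equiv v (D' k) (D' j)" unfolding lin_equiv_def
        using u by (intro exI[of _ u]) (simp add: z)
      then show False using hyp less.prems k by blast
    qed
    have sE: "sum E UNIV = sum E1 UNIV + sum E2 UNIV" unfolding E by (simp add: sum.distrib)
    obtain \<rho>1 where "E1 \<rho>1 \<noteq> 0" using ex1 by blast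
    then have p1: "sum E1 UNIV > 0"
      using E1nn member_le_sum[of \<rho>1 UNIV E1] by (metis UNIV_I finite order.not_eq_order_implies_strict order_less_le_trans)
    obtain \<rho>2 where "E2 \<rho>2 \<noteq> 0" using ex2 by blast
    then have p2: "sum E2 UNIV > 0"
      using E2nn member_le_sum[of \<rho>2 UNIV E2] by (metis UNIV_I finite order.not_eq_order_implies_strict order_less_le_trans)
    have IH1: "((\<lambda>l. (if l = k then 1 else 0) - (if l = i then 1 else 0)), E1) \<in> NQ v D' r"
      using less.hyps[of E1 i k] less.prems k E1 sE p1 p2 by simp
    have IH2: "((\<lambda>l. (if l = j then 1 else 0) - (if l = k then 1 else 0)), E2) \<in> NQ v D' r"
      using less.hyps[of E2 k j] less.prems k E2 sE p1 p2 by simp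
    have "wadd ((\<lambda>l. (if l = k then 1 else 0) - (if l = i then 1 else 0)), E1)
               ((\<lambda>l. (if l = j then 1 else 0) - (if l = k then 1 else 0)), E2)
          = ((\<lambda>l. (if l = j then 1 else 0) - (if l = i then 1 else 0)), E)"
      by (simp add: wadd_def E)
    then show ?thesis using NQ_wadd[OF IH1 IH2] by simp
  qed
qed

lemma psi_NQ:
  assumes hyp: "\<forall>i\<le>r. \<forall>j\<le>r. i \<noteq> j \<longrightarrow> \<not> lin_equiv v (D' i) (D' j)"
    and u: "\<forall>\<rho>. pair u (v \<rho>) \<ge> 0"
  shows "psi v u \<in> NQ v D' r"
proof -
  have "div_of v u \<in> sections v D' 0 0"
    unfolding sections_def lin_equiv_def using u by (auto simp: div_of_def)
  from sections_NQ[OF hyp _ _ this] show ?thesis by (simp add: psi_def)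
qed

lemma psi_ZQ:
  assumes tc: "toric_cone_data v"
    and hyp: "\<forall>i\<le>r. \<forall>j\<le>r. i \<noteq> j \<longrightarrow> \<not> lin_equiv v (D' i) (D' j)"
  shows "psi v u \<in> ZQ v D' r"
proof -
  obtain w where w: "\<forall>\<rho>. pair w (v \<rho>) \<ge> 1" using interior_int[OF tc] by blast
  define N where "N = (\<Sum>\<rho>\<in>UNIV. \<bar>pair u (v \<rho>)\<bar>)"
  have N: "\<bar>pair u (v \<rho>)\<bar> \<le> N" for \<rho>
    unfolding N_def by (rule member_le_sum) auto
  have N0: "N \<ge> 0" unfolding N_def by (simp add: sum_nonneg)
  define u1 where "u1 = (\<lambda>k. u k + N * w k)"
  define u2 where "u2 = (\<lambda>k. N * w k)"
  have "pair u1 (v \<rho>) \<ge> 0" for \<rho>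
  proof -
    have "pair u1 (v \<rho>) = pair u (v \<rho>) + N * pair w (v \<rho>)"
      unfolding u1_def using pair_add[of u "\<lambda>k. N * w k"] pair_smult by simp
    moreover have "N * pair w (v \<rho>) \<ge> N" using w N0 by (simp add: mult_le_cancel_left1)
    ultimately show ?thesis using N[of \<rho>] by linarith
  qed
  then have 1: "psi v u1 \<in> ZQ v D' r" using psi_NQ[OF hyp] NQ_ZQ by blast
  have "pair u2 (v \<rho>) \<ge> 0" for \<rho>
  proof -
    have "pair w (v \<rho>) \<ge> 0" using w by (meson order_trans zero_le_one)
    then show ?thesis unfolding u2_def pair_smult using N0 by simp
  qed
  then have 2: "psi v u2 \<in> ZQ v D' r" using psi_NQ[OF hyp] NQ_ZQ by blast
  have "psi v u = wadd (psi v u1) (wneg (psi v u2))"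
    by (simp add: psi_def wadd_def wneg_def div_of_def u1_def u2_def pair_add)
  then show ?thesis using ZQ_wadd[OF 1 ZQ_wneg[OF 2]] by simp
qed

lemma additive_linear:
  fixes g :: "('n::finite \<Rightarrow> int) \<Rightarrow> real"
  assumes add: "\<And>x y. g (\<lambda>k. x k + y k) = g x + g y"
  shows "g u = (\<Sum>i\<in>UNIV. real_of_int (u i) * g (\<lambda>k'. if k' = i then 1 else 0))"
proof -
  have g0: "g (\<lambda>k. 0) = 0" using add[of "\<lambda>k. 0" "\<lambda>k. 0"] by simp
  have gneg: "g (\<lambda>k. - x k) = - g x" for x
    using add[of x "\<lambda>k. - x k"] g0 by simp
  have gnat: "g (\<lambda>k. int n * x k) = real n * g x" for n x
  proof (induction n)
    case 0 then show ?case using g0 by simp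
  next
    case (Suc n)
    have "g (\<lambda>k. int (Suc n) * x k) = g (\<lambda>k. int n * x k + x k)" by (simp add: algebra_simps)
    also have "\<dots> = g (\<lambda>k. int n * x k) + g x" by (rule add)
    finally show ?case using Suc by (simp add: algebra_simps)
  qed
  have gint: "g (\<lambda>k. m * x k) = real_of_int m * g x" for m x
  proof (cases "m \<ge> 0")
    case True
    define n where "n = nat m"
    have "m = int n" using True by (simp add: n_def)
    then show ?thesis using gnat by simp
  next
    case False
    define n where "n = nat (- m)"
    have n: "m = - int n" using False by (simp add: n_def)
    have "g (\<lambda>k. m * x k) = g (\<lambda>k. - (int n * x k))" by (simp add: n)
    also have "\<dots> = - g (\<lambda>k. int n * x k)" by (rule gneg)
    finally show ?thesis using gnat n by simp
  qed
  have gsum: "finite A \<Longrightarrow> g (\<lambda>k. \<Sum>i\<in>A. h i k) = (\<Sum>i\<in>A. g (h i))" for A h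
  proof (induction A rule: finite_induct)
    case empty then show ?case using g0 by simp
  next
    case (insert a A)
    then show ?case using add[of "h a" "\<lambda>k. \<Sum>i\<in>A. h i k"] by simp
  qed
  have "u = (\<lambda>k. \<Sum>i\<in>UNIV. u i * (if k = i then 1 else 0))"
  proof
    fix k
    have "(\<Sum>i\<in>UNIV. u i * (if k = i then 1 else 0)) = (\<Sum>i\<in>UNIV. if k = i then u i else 0)"
      by (rule sum.cong) auto
    then show "u k = (\<Sum>i\<in>UNIV. u i * (if k = i then 1 else 0))" by simp
  qed
  then have "g u = (\<Sum>i\<in>UNIV. g (\<lambda>k. u i * (if k = i then 1 else 0)))"
    using gsum[of UNIV "\<lambda>i k. u i * (if k = i then 1 else 0)"] by simp
  also have "\<dots> = (\<Sum>i\<in>UNIV. real_of_int (u i) * g (\<lambda>k'. if k' = i then 1 else 0))"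
    by (rule sum.cong[OF refl]) (rule gint)
  finally show ?thesis .
qed

theorem lemma2p10:
  fixes v :: "'r::finite \<Rightarrow> 'n::finite \<Rightarrow> int"
    and D' :: "nat \<Rightarrow> 'r \<Rightarrow> int"
    and r :: nat
  assumes "toric_cone_data v"
    and "lin_equiv v (D' 0) (\<lambda>\<rho>. 0)"
    and "\<forall>i\<le>r. \<forall>j\<le>r. i \<noteq> j \<longrightarrow> \<not> lin_equiv v (D' i) (D' j)"
  shows "psi_star_R v ` coneC v D' r = cone_sigma v"
proof
  show "psi_star_R v ` coneC v D' r \<subseteq> cone_sigma v"
  proof
    fix y assume "y \<in> psi_star_R v ` coneC v D' r"
    then obtain f where f: "f \<in> coneC v D' r" and y: "y = psi_star_R v f" by blast
    define g where "g = (\<lambda>u. f (psi v u))"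
    have gadd: "g (\<lambda>k. a k + b k) = g a + g b" for a b
      using f psi_ZQ[OF assms(1) assms(3)] unfolding g_def coneC_def ZQ_dual_R_def
      by (simp add: psi_add)
    have "\<forall>u::'n \<Rightarrow> int. (\<forall>\<rho>. pair u (v \<rho>) \<ge> 0) \<longrightarrow> (\<Sum>k\<in>UNIV. real_of_int (u k) * y k) \<ge> 0"
    proof (intro allI impI)
      fix u :: "'n \<Rightarrow> int" assume "\<forall>\<rho>. pair u (v \<rho>) \<ge> 0"
      then have "psi v u \<in> NQ v D' r" using psi_NQ[OF assms(3)] by blast
      then have "g u \<ge> 0" using f unfolding coneC_def g_def by blast
      moreover have "g u = (\<Sum>k\<in>UNIV. real_of_int (u k) * y k)"
        using additive_linear[of g u, OF gadd] by (simp add: y psi_star_R_def g_def)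
      ultimately show "(\<Sum>k\<in>UNIV. real_of_int (u k) * y k) \<ge> 0" by simp
    qed
    then show "y \<in> cone_sigma v" using farkas_int[OF assms(1)] by blast
  qed
next
  show "cone_sigma v \<subseteq> psi_star_R v ` coneC v D' r"
  proof
    fix x assume "x \<in> cone_sigma v"
    then obtain c where c: "\<forall>\<rho>. c \<rho> \<ge> 0" "x = (\<lambda>k. \<Sum>\<rho>\<in>UNIV. c \<rho> * real_of_int (v \<rho> k))"
      unfolding cone_sigma_def by blast
    define f where "f = (\<lambda>z::'r wtdiv. \<Sum>\<rho>\<in>UNIV. c \<rho> * real_of_int (snd z \<rho>))"
    have "f \<in> ZQ_dual_R v D' r"
      unfolding ZQ_dual_R_def f_def by (simp add: wadd_def distrib_left sum.distrib)
    moreover have "f u \<ge> 0" if uN: "u \<in> NQ v D' r" for u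
    proof -
      obtain S d where h: "u = lincomb S d" "finite S" "S \<subseteq> arrows v D' r" "\<forall>a. d a \<ge> 0"
        using uN unfolding NQ_def by blast
      have arr: "snd (piQ a) \<rho> \<ge> 0" if "a \<in> arrows v D' r" for a \<rho>
        using that unfolding arrows_def irreducible_section_def sections_def piQ_def by auto
      have "snd u \<rho> \<ge> 0" for \<rho>
        unfolding h(1) lincomb_def using h(3,4) arr by (auto intro!: sum_nonneg)
      then show ?thesis unfolding f_def using c(1) by (auto intro!: sum_nonneg)
    qed
    ultimately have fC: "f \<in> coneC v D' r" unfolding coneC_def by blast
    have pe: "pair (\<lambda>k'. if k' = k then 1 else 0) w = w k" for k and w :: "'n \<Rightarrow> int"
    proof -
      have "(\<Sum>ka\<in>UNIV. (if ka = k then 1 else 0) * w ka) = (\<Sum>ka\<in>UNIV. if ka = k then w ka else 0)"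
        by (rule sum.cong) auto
      then show ?thesis by (simp add: pair_def)
    qed
    have "psi_star_R v f = x"
      by (simp add: psi_star_R_def f_def psi_def div_of_def pe c(2))
    then show "x \<in> psi_star_R v ` coneC v D' r" using fC by blast
  qed
qed

end
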